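(* Let $\phi$ be a formula, $\xi,\eta$ models, and $k,m\in\omega$ with $m>0$, such that: (1) $\mathrm{Sub}(\phi,\langle k,0\rangle,\xi)=\mathrm{Sub}(\phi,\langle k+m,0\rangle,\xi)$; (2) $\xi(\mathbf t,p)=\eta(\mathbf t,p)$ for all $\mathbf t<\langle k+m,0\rangle$ and all $p\in Var$; (3) $\eta(s_1,s_2,p)=\eta(s_1+m,s_2,p)$ for all $\mathbf s\ge\langle k,0\rangle$ and all $p\in Var$; (4) whenever $\psi\,\mathtt U\,\theta\in\mathrm{Sub}(\phi)$ and $\xi\models_{\langle k,0\rangle}\psi\,\mathtt U\,\theta$, there is $\mathbf r$ with $\langle k,0\rangle\le\mathbf r<\langle k+m,0\rangle$ and $\xi\models_{\mathbf r}\theta$. Then (a) $\mathrm{Sub}(\phi,\mathbf t,\xi)=\mathrm{Sub}(\phi,\mathbf t,\eta)$ for all $\mathbf t<\langle k+m,0\rangle$; and (b) $\mathrm{Sub}(\phi,\mathbf s,\eta)=\mathrm{Sub}(\phi,\langle s_1+m,s_2\rangle,\eta)$ for all $\mathbf s\ge\langle k,0\rangle$.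
   Context: Fix $Var=\{p_n : n\in\omega\}$. The formulas of $L([1],[\omega],\mathtt u,\mathtt U)$ form the smallest set containing $Var$ and closed under $\neg\phi$, $[1]\phi$, $[\omega]\phi$, $(\phi\wedge\psi)$, $(\phi\,\mathtt u\,\psi)$, $(\phi\,\mathtt U\,\psi)$. Time instants are pairs $\mathbf t=\langle t_1,t_2\rangle\in\omega\times\omega$ ordered lexicographically ($\langle i,j\rangle\le\langle k,l\rangle$ iff $i<k$, or $i=k$ and $j\le l$). A model is a function $\xi:\omega\times\omega\times Var\to\{0,1\}$; we write $\xi(\mathbf t,p)$ for $\xi(t_1,t_2,p)$. Satisfaction: $\xi\models_{\mathbf r}p$ iff $\xi(r_1,r_2,p)=1$; $\neg,\wedge$ classical; $\xi\models_{\mathbf r}[1]\phi$ iff $\xi\models_{\langle r_1,r_2+1\rangle}\phi$; $\xi\models_{\mathbf r}[\omega]\phi$ iff $\xi\models_{\langle r_1+1,0\rangle}\phi$; $\xi\models_{\mathbf r}\phi\,\mathtt u\,\psi$ iff there is $k\in\omega$ with $\xi\models_{\langle r_1,r_2+k\rangle}\psi$ and $\xi\models_{\langle r_1,r_2+i\rangle}\phi$ for all $0\le i<k$; $\xi\models_{\mathbf r}\phi\,\mathtt U\,\psi$ iff there is $\mathbf s\ge\mathbf r$ with $\xi\models_{\mathbf s}\psi$ and $\xi\models_{\mathbf t}\phi$ for all $\mathbf r\le\mathbf t<\mathbf s$. $\mathrm{Sub}(\phi)$ is the set of subformulas of $\phi$, and $\mathrm{Sub}(\phi,\mathbf t,\xi)=\{\psi\in\mathrm{Sub}(\phi)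 : \xi\models_{\mathbf t}\psi\}$. *)

theory Defs
  imports Main
begin

datatype form = Var nat | Neg form | Next1 form | NextW form
  | And form form | Until form form | UUntil form form

text \<open>Models: omega x omega x Var to {0,1}, rendered as a boolean-valued function.\<close>
type_synonym model = "nat \<Rightarrow> nat \<Rightarrow> nat \<Rightarrow> bool"

definition lex_le :: "nat \<times> nat \<Rightarrow> nat \<times> nat \<Rightarrow> bool" where
  "lex_le t s \<longleftrightarrow> fst t < fst s \<or> (fst t = fst s \<and> snd t \<le> snd s)"

definition lex_less :: "nat \<times> nat \<Rightarrow> nat \<times> nat \<Rightarrow> bool" where
  "lex_less t s \<longleftrightarrow> lex_le t s \<and> t \<noteq> s"

fun sat :: "model \<Rightarrow> nat \<times> nat \<Rightarrow> form \<Rightarrow> bool" where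
  "sat \<xi> r (Var n) = \<xi> (fst r) (snd r) n"
| "sat \<xi> r (Neg \<phi>) = (\<not> sat \<xi> r \<phi>)"
| "sat \<xi> r (Next1 \<phi>) = sat \<xi> (fst r, Suc (snd r)) \<phi>"
| "sat \<xi> r (NextW \<phi>) = sat \<xi> (Suc (fst r), 0) \<phi>"
| "sat \<xi> r (And \<phi> \<psi>) = (sat \<xi> r \<phi> \<and> sat \<xi> r \<psi>)"
| "sat \<xi> r (Until \<phi> \<psi>) =
     (\<exists>k. sat \<xi> (fst r, snd r + k) \<psi> \<and> (\<forall>i<k. sat \<xi> (fst r, snd r + i) \<phi>))"
| "sat \<xi> r (UUntil \<phi> \<psi>) =
     (\<exists>s. lex_le r s \<and> sat \<xi> s \<psi> \<and> (\<forall>t. lex_le r t \<and> lex_less t s \<longrightarrow> sat \<xi> t \<phi>))"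

fun Sub :: "form \<Rightarrow> form set" where
  "Sub (Var n) = {Var n}"
| "Sub (Neg \<phi>) = insert (Neg \<phi>) (Sub \<phi>)"
| "Sub (Next1 \<phi>) = insert (Next1 \<phi>) (Sub \<phi>)"
| "Sub (NextW \<phi>) = insert (NextW \<phi>) (Sub \<phi>)"
| "Sub (And \<phi> \<psi>) = insert (And \<phi> \<psi>) (Sub \<phi> \<union> Sub \<psi>)"
| "Sub (Until \<phi> \<psi>) = insert (Until \<phi> \<psi>) (Sub \<phi> \<union> Sub \<psi>)"
| "Sub (UUntil \<phi> \<psi>) = insert (UUntil \<phi> \<psi>) (Sub \<phi> \<union> Sub \<psi>)"

definition SubAt :: "form \<Rightarrow> nat \<times> nat \<Rightarrow> model \<Rightarrow> form set" where
  "SubAt \<phi> t \<xi> = {\<psi> \<in> Sub \<phi>. sat \<xi> t \<psi>}"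

end

theory Submission
  imports Defs
begin

lemma lex_le_trans: "lex_le a b \<Longrightarrow> lex_le b c \<Longrightarrow> lex_le a c"
  by (auto simp: lex_le_def)

lemma lex_le_less_trans: "lex_le a b \<Longrightarrow> lex_less b c \<Longrightarrow> lex_less a c"
  by (auto simp: lex_le_def lex_less_def prod_eq_iff)

lemma lex_less_trans: "lex_less a b \<Longrightarrow> lex_less b c \<Longrightarrow> lex_less a c"
  by (auto simp: lex_le_def lex_less_def prod_eq_iff)

lemma lt_ge: "lex_less u r \<Longrightarrow> lex_less r B \<Longrightarrow> \<not> lex_less s B \<Longrightarrow> lex_less u s"
  by (auto simp: lex_le_def lex_less_def prod_eq_iff)

lemma lex_less_imp_le: "lex_less a b \<Longrightarrow> lex_le a b"
  by (auto simp: lex_less_def)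

lemma lex_not_less: "\<not> lex_less a b \<Longrightarrow> lex_le b a"
  by (auto simp: lex_le_def lex_less_def prod_eq_iff)

lemma Sub_self: "a \<in> Sub a"
  by (cases a) auto

lemma Sub_trans: "b \<in> Sub a \<Longrightarrow> Sub b \<subseteq> Sub a"
  by (induction a) auto

lemma subD: "x \<in> Sub p \<Longrightarrow> y \<in> Sub x \<Longrightarrow> y \<in> Sub p"
  using Sub_trans by blast

lemma subs:
  "Neg f \<in> Sub p \<Longrightarrow> f \<in> Sub p"
  "Next1 f \<in> Sub p \<Longrightarrow> f \<in> Sub p"
  "NextW f \<in> Sub p \<Longrightarrow> f \<in> Sub p"
  "And f g \<in> Sub p \<Longrightarrow> f \<in> Sub p" "And f g \<in> Sub p \<Longrightarrow> g \<in> Sub p"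
  "Until f g \<in> Sub p \<Longrightarrow> f \<in> Sub p" "Until f g \<in> Sub p \<Longrightarrow> g \<in> Sub p"
  "UUntil f g \<in> Sub p \<Longrightarrow> f \<in> Sub p" "UUntil f g \<in> Sub p \<Longrightarrow> g \<in> Sub p"
  by (erule subD, simp add: Sub_self)+

lemma locality:
  "(\<forall>t p. lex_le r t \<longrightarrow> X (fst t) (snd t) p = Y (fst t) (snd t) p) \<Longrightarrow> sat X r f = sat Y r f"
proof (induction f arbitrary: r)
  case (Var n)
  then show ?case by (auto simp: lex_le_def)
next
  case (Neg f)
  then show ?case by simp
next
  case (Next1 f)
  have "\<forall>t p. lex_le (fst r, Suc (snd r)) t \<longrightarrow> X (fst t) (snd t) p = Y (fst t) (snd t) p"
    using Next1.prems by (auto simp: lex_le_def)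
  then show ?case using Next1.IH by simp
next
  case (NextW f)
  have "\<forall>t p. lex_le (Suc (fst r), 0) t \<longrightarrow> X (fst t) (snd t) p = Y (fst t) (snd t) p"
    using NextW.prems by (auto simp: lex_le_def)
  then show ?case using NextW.IH by simp
next
  case (And f1 f2)
  then show ?case by simp
next
  case (Until f1 f2)
  have "\<And>i. \<forall>t p. lex_le (fst r, snd r + i) t \<longrightarrow> X (fst t) (snd t) p = Y (fst t) (snd t) p"
    using Until.prems by (auto simp: lex_le_def)
  then show ?case using Until.IH by simp
next
  case (UUntil f1 f2)
  have "\<And>s. lex_le r s \<Longrightarrow> \<forall>t p. lex_le s t \<longrightarrow> X (fst t) (snd t) p = Y (fst t) (snd t) p"
    using UUntil.prems lex_le_trans by blast
  then have A: "\<And>s. lex_le r s \<Longrightarrow> sat X s f1 = sat Y s f1 \<and> sat X s f2 = sat Y s f2"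
    using UUntil.IH by blast
  show ?case
    apply simp
    apply (rule iffI)
     apply (metis A)
    apply (metis A)
    done
qed

lemma shift_le: "lex_le (a + m, b) (c + m, d) = lex_le (a, b) (c, d)"
  by (auto simp: lex_le_def)

lemma shift_less: "lex_less (a + m, b) (c + m, d) = lex_less (a, b) (c, d)"
  by (auto simp: lex_le_def lex_less_def)

lemma shift:
  "sat (\<lambda>i j p. X (i + m) j p) r f = sat X (fst r + m, snd r) f"
proof (induction f arbitrary: r)
  case (UUntil f1 f2)
  let ?Y = "\<lambda>i j p. X (i + m) j p"
  show ?case
  proof
    assume "sat ?Y r (UUntil f1 f2)"
    then obtain s where s: "lex_le r s" "sat ?Y s f2"
      "\<forall>t. lex_le r t \<and> lex_less t s \<longrightarrow> sat ?Y t f1" by auto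
    have 1: "lex_le (fst r + m, snd r) (fst s + m, snd s)"
      using s(1) shift_le[of "fst r" m "snd r" "fst s" "snd s"] by simp
    have 2: "sat X (fst s + m, snd s) f2" using s(2) UUntil.IH(2) by simp
    have 3: "sat X t f1" if "lex_le (fst r + m, snd r) t" "lex_less t (fst s + m, snd s)" for t
    proof -
      have ge: "fst t \<ge> m" using that(1) by (auto simp: lex_le_def)
      define t' where "t' = (fst t - m, snd t)"
      have tt: "t = (fst t' + m, snd t')" using ge by (auto simp: t'_def)
      have "lex_le r t'" using that(1) tt shift_le[of "fst r" m "snd r" "fst t'" "snd t'"]
        by simp
      moreover have "lex_less t' s" using that(2) tt shift_less[of "fst t'" m "snd t'" "fst s" "snd s"]
        by simp
      ultimately have "sat ?Y t' f1" using s(3) by blast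
      then show ?thesis using UUntil.IH(1)[of t'] tt by simp
    qed
    show "sat X (fst r + m, snd r) (UUntil f1 f2)"
      using 1 2 3 by auto
  next
    assume "sat X (fst r + m, snd r) (UUntil f1 f2)"
    then obtain s where s: "lex_le (fst r + m, snd r) s" "sat X s f2"
      "\<forall>t. lex_le (fst r + m, snd r) t \<and> lex_less t s \<longrightarrow> sat X t f1" by auto
    have ge: "fst s \<ge> m" using s(1) by (auto simp: lex_le_def)
    define s' where "s' = (fst s - m, snd s)"
    have ss: "s = (fst s' + m, snd s')" using ge by (auto simp: s'_def)
    have 1: "lex_le r s'" using s(1) ss shift_le[of "fst r" m "snd r" "fst s'" "snd s'"] by simp
    have 2: "sat ?Y s' f2" using s(2) ss UUntil.IH(2)[of s'] by simp
    have 3: "sat ?Y t f1" if "lex_le r t" "lex_less t s'" for t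
    proof -
      have "lex_le (fst r + m, snd r) (fst t + m, snd t)"
        using that(1) shift_le[of "fst r" m "snd r" "fst t" "snd t"] by simp
      moreover have "lex_less (fst t + m, snd t) s"
        using that(2) ss shift_less[of "fst t" m "snd t" "fst s'" "snd s'"] by simp
      ultimately have "sat X (fst t + m, snd t) f1" using s(3) by blast
      then show ?thesis using UUntil.IH(1)[of t] by simp
    qed
    show "sat ?Y r (UUntil f1 f2)"
      unfolding sat.simps by (rule exI[of _ s']) (use 1 2 3 in blast)
  qed
qed auto

lemma gen:
  assumes agree: "\<forall>t. lex_less t B \<longrightarrow> sat X t f1 = sat Y t f1 \<and> sat X t f2 = sat Y t f2"
    and bd: "sat X B (UUntil f1 f2) \<Longrightarrow> sat Y B (UUntil f1 f2)"
    and tB: "lex_less t B" and sx: "sat X t (UUntil f1 f2)"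
  shows "sat Y t (UUntil f1 f2)"
proof -
  obtain s where s: "lex_le t s" "sat X s f2"
      "\<forall>u. lex_le t u \<and> lex_less u s \<longrightarrow> sat X u f1" using sx by auto
  show ?thesis
  proof (cases "lex_less s B")
    case True
    have "\<forall>u. lex_le t u \<and> lex_less u s \<longrightarrow> sat Y u f1"
      using s(3) agree True by (meson lex_less_imp_le lex_le_less_trans)
    moreover have "sat Y s f2" using s(2) agree True by blast
    ultimately show ?thesis using s(1) unfolding sat.simps by blast
  next
    case False
    hence Bs: "lex_le B s" by (rule lex_not_less)
    have tB': "lex_le t B" using tB by (rule lex_less_imp_le)
    have "sat X B (UUntil f1 f2)"
      unfolding sat.simps
      using Bs s lex_le_trans[OF tB'] by blast
    then have "sat Y B (UUntil f1 f2)" by (rule bd)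
    then obtain s2 where s2: "lex_le B s2" "sat Y s2 f2"
      "\<forall>u. lex_le B u \<and> lex_less u s2 \<longrightarrow> sat Y u f1" by auto
    have "sat Y u f1" if "lex_le t u" "lex_less u s2" for u
    proof (cases "lex_less u B")
      case True
      then have "lex_less u s" using Bs lex_less_def lex_le_less_trans
        by (metis lex_le_trans lex_less_imp_le lex_not_less)
      then show ?thesis using s(3) that agree True by blast
    next
      case False
      then show ?thesis using s2(3) that lex_not_less by blast
    qed
    then show ?thesis unfolding sat.simps using s2 lex_le_trans[OF tB' s2(1)] by blast
  qed
qed

lemma per_b:
  assumes h3: "\<forall>s p. lex_le (k, 0) s \<longrightarrow> \<eta> (fst s) (snd s) p = \<eta> (fst s + m) (snd s) p"
    and s: "lex_le (k, 0) s"
  shows "sat \<eta> s f = sat \<eta> (fst s + m, snd s) f"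
proof -
  have "sat \<eta> s f = sat (\<lambda>i j p. \<eta> (i + m) j p) s f"
    apply (rule locality)
    using h3 s lex_le_trans by blast
  also have "\<dots> = sat \<eta> (fst s + m, snd s) f" by (rule shift)
  finally show ?thesis .
qed

lemma per_n:
  assumes h3: "\<forall>s p. lex_le (k, 0) s \<longrightarrow> \<eta> (fst s) (snd s) p = \<eta> (fst s + m) (snd s) p"
    and s: "lex_le (k, 0) s"
  shows "sat \<eta> (fst s + n * m, snd s) f = sat \<eta> s f"
proof (induction n)
  case (Suc n)
  have "lex_le (k, 0) (fst s + n * m, snd s)" using s by (auto simp: lex_le_def)
  from per_b[OF h3 this, of f] Suc show ?case by (simp add: ac_simps)
qed simp

theorem mainTheorem14:
  fixes \<phi> :: form and \<xi> \<eta> :: model and k m :: nat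
  assumes "m > 0"
    and h1: "SubAt \<phi> (k, 0) \<xi> = SubAt \<phi> (k + m, 0) \<xi>"
    and h2: "\<forall>t p. lex_less t (k + m, 0) \<longrightarrow> \<xi> (fst t) (snd t) p = \<eta> (fst t) (snd t) p"
    and h3: "\<forall>s p. lex_le (k, 0) s \<longrightarrow> \<eta> (fst s) (snd s) p = \<eta> (fst s + m) (snd s) p"
    and h4: "\<forall>\<psi> \<theta>. UUntil \<psi> \<theta> \<in> Sub \<phi> \<and> sat \<xi> (k, 0) (UUntil \<psi> \<theta>) \<longrightarrow>
               (\<exists>r. lex_le (k, 0) r \<and> lex_less r (k + m, 0) \<and> sat \<xi> r \<theta>)"
  shows "(\<forall>t. lex_less t (k + m, 0) \<longrightarrow> SubAt \<phi> t \<xi> = SubAt \<phi> t \<eta>) \<and>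
         (\<forall>s. lex_le (k, 0) s \<longrightarrow> SubAt \<phi> s \<eta> = SubAt \<phi> (fst s + m, snd s) \<eta>)"
proof -
  define B :: "nat \<times> nat" where "B = (k + m, 0)"
  have H1: "sat \<xi> (k, 0) f = sat \<xi> B f" if "f \<in> Sub \<phi>" for f
    using h1 that unfolding SubAt_def B_def by blast
  have PB: "sat \<eta> (k, 0) f = sat \<eta> B f" for f
    using per_b[OF h3, of "(k,0)" f] by (simp add: B_def lex_le_def)
  have kB: "lex_less (k, 0) B" using \<open>m > 0\<close> by (simp add: B_def lex_less_def lex_le_def)
  have A: "f \<in> Sub \<phi> \<longrightarrow> (\<forall>t. lex_less t B \<longrightarrow> sat \<xi> t f = sat \<eta> t f)" for f
  proof (induction f)
    case (Var n)
    then show ?case using h2 by (simp add: B_def)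
  next
    case (Neg f)
    show ?case
    proof (intro impI allI)
      fix t assume a: "Neg f \<in> Sub \<phi>" "lex_less t B"
      from a(1) have "f \<in> Sub \<phi>" by (rule subs(1))
      then have "sat \<xi> t f = sat \<eta> t f" using Neg.IH \<open>lex_less t B\<close> by blast
      then show "sat \<xi> t (Neg f) = sat \<eta> t (Neg f)" by simp
    qed
  next
    case (And f1 f2)
    show ?case
    proof (intro impI allI)
      fix t assume a: "And f1 f2 \<in> Sub \<phi>" "lex_less t B"
      from a(1) have "f1 \<in> Sub \<phi>" "f2 \<in> Sub \<phi>" by (rule subs(4), rule subs(5))
      then have "sat \<xi> t f1 = sat \<eta> t f1" "sat \<xi> t f2 = sat \<eta> t f2"
        using And.IH a(2) by blast+
      then show "sat \<xi> t (And f1 f2) = sat \<eta> t (And f1 f2)" by simp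
    qed
  next
    case (Next1 f)
    show ?case
    proof (intro impI allI)
      fix t assume fs: "Next1 f \<in> Sub \<phi>" and t: "lex_less t B"
      have "f \<in> Sub \<phi>" using fs by (rule subs(2))
      moreover have "lex_less (fst t, Suc (snd t)) B" using t by (auto simp: B_def lex_less_def lex_le_def prod_eq_iff)
      ultimately show "sat \<xi> t (Next1 f) = sat \<eta> t (Next1 f)" using Next1 by simp
    qed
  next
    case (Until f1 f2)
    show ?case
    proof (intro impI allI)
      fix t assume fs: "Until f1 f2 \<in> Sub \<phi>" and t: "lex_less t B"
      have "f1 \<in> Sub \<phi>" "f2 \<in> Sub \<phi>" using fs by (rule subs(6), rule subs(7))
      moreover have "\<And>i. lex_less (fst t, snd t + i) B" using t by (auto simp: B_def lex_less_def lex_le_def prod_eq_iff)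
      ultimately show "sat \<xi> t (Until f1 f2) = sat \<eta> t (Until f1 f2)" using Until by simp
    qed
  next
    case (NextW f)
    show ?case
    proof (intro impI allI)
      fix t assume fs: "NextW f \<in> Sub \<phi>" and t: "lex_less t B"
      have f: "f \<in> Sub \<phi>" using fs by (rule subs(3))
      show "sat \<xi> t (NextW f) = sat \<eta> t (NextW f)"
      proof (cases "Suc (fst t) < k + m")
        case True
        then have "lex_less (Suc (fst t), 0) B" by (auto simp: B_def lex_less_def lex_le_def prod_eq_iff)
        then show ?thesis using NextW f by simp
      next
        case False
        then have "(Suc (fst t), 0) = B" using t by (auto simp: B_def lex_less_def lex_le_def prod_eq_iff)
        moreover have "sat \<xi> B f = sat \<eta> B f"
          using H1[OF f] PB[of f] NextW f kB by simp
        ultimately show ?thesis by simp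
      qed
    qed
  next
    case (UUntil f1 f2)
    show ?case
    proof (intro impI)
      assume fs: "UUntil f1 f2 \<in> Sub \<phi>"
      have "f1 \<in> Sub \<phi>" "f2 \<in> Sub \<phi>" using fs by (rule subs(8), rule subs(9))
      then have ag: "\<forall>t. lex_less t B \<longrightarrow> sat \<xi> t f1 = sat \<eta> t f1 \<and> sat \<xi> t f2 = sat \<eta> t f2"
        using UUntil by simp
      have ag': "\<forall>t. lex_less t B \<longrightarrow> sat \<eta> t f1 = sat \<xi> t f1 \<and> sat \<eta> t f2 = sat \<xi> t f2"
        using ag by simp
      define first where "first X \<longleftrightarrow> (\<exists>s. lex_le (k,0) s \<and> lex_less s B \<and> sat X s f2 \<and>
          (\<forall>u. lex_le (k,0) u \<and> lex_less u s \<longrightarrow> sat X u f1))" for X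
      have fe: "first \<xi> = first \<eta>"
        unfolding first_def using ag lex_less_trans by blast
      have f1: "first X \<Longrightarrow> sat X (k,0) (UUntil f1 f2)" for X
        unfolding first_def sat.simps by blast
      have x1: "sat \<xi> (k,0) (UUntil f1 f2) \<Longrightarrow> first \<xi>"
      proof -
        assume a: "sat \<xi> (k,0) (UUntil f1 f2)"
        then obtain s where s: "lex_le (k,0) s" "sat \<xi> s f2"
          "\<forall>u. lex_le (k,0) u \<and> lex_less u s \<longrightarrow> sat \<xi> u f1" by auto
        show "first \<xi>"
        proof (cases "lex_less s B")
          case True then show ?thesis unfolding first_def using s by blast
        next
          case False
          obtain r where r: "lex_le (k, 0) r" "lex_less r B" "sat \<xi> r f2"
            using h4 fs a unfolding B_def by blast
          have "lex_le r s" using r(2) False lex_less_imp_le lex_not_less lex_le_trans by blast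
          have "\<forall>u. lex_le (k,0) u \<and> lex_less u r \<longrightarrow> sat \<xi> u f1"
            using s(3) r(2) False lt_ge by blast
          then show ?thesis unfolding first_def using r by blast
        qed
      qed
      have y1: "sat \<eta> (k,0) (UUntil f1 f2) \<Longrightarrow> first \<eta>"
      proof -
        assume a: "sat \<eta> (k,0) (UUntil f1 f2)"
        then obtain s where s: "lex_le (k,0) s" "sat \<eta> s f2"
          "\<forall>u. lex_le (k,0) u \<and> lex_less u s \<longrightarrow> sat \<eta> u f1" by auto
        show "first \<eta>"
        proof (cases "lex_less s B")
          case True then show ?thesis unfolding first_def using s by blast
        next
          case False
          then have sk: "fst s \<ge> k + m" by (auto simp: B_def lex_less_def lex_le_def prod_eq_iff)
          define s' where "s' = (k + (fst s - k) mod m, snd s)"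
          have s'1: "lex_le (k,0) s'" by (auto simp: s'_def lex_le_def)
          have s'2: "lex_less s' B"
          proof -
            define q where "q = (fst s - k) mod m"
            have lt: "q < m" using \<open>m > 0\<close> by (simp add: q_def)
            have "s' = (k + q, snd s)" by (simp add: s'_def q_def)
            then show ?thesis using lt by (auto simp: B_def lex_less_def lex_le_def)
          qed
          have eq: "fst s = fst s' + ((fst s - k) div m) * m" "snd s = snd s'"
            using sk by (simp_all add: s'_def)
          have "sat \<eta> s' f2" using per_n[OF h3 s'1, of "(fst s - k) div m" f2] s(2) eq
            by (metis prod.collapse)
          moreover have "\<forall>u. lex_le (k,0) u \<and> lex_less u s' \<longrightarrow> sat \<eta> u f1"
            using s(3) s'2 False lt_ge by blast
          ultimately show ?thesis unfolding first_def using s'1 s'2 by blast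
        qed
      qed
      have C: "sat \<xi> B (UUntil f1 f2) = sat \<eta> B (UUntil f1 f2)"
        using H1[OF fs] PB[of "UUntil f1 f2"] x1 y1 f1 fe by blast
      show "\<forall>t. lex_less t B \<longrightarrow> sat \<xi> t (UUntil f1 f2) = sat \<eta> t (UUntil f1 f2)"
      proof (intro allI impI iffI)
        fix t assume "lex_less t B" "sat \<xi> t (UUntil f1 f2)"
        then show "sat \<eta> t (UUntil f1 f2)" using gen[OF ag _] C by blast
      next
        fix t assume "lex_less t B" "sat \<eta> t (UUntil f1 f2)"
        then show "sat \<xi> t (UUntil f1 f2)" using gen[OF ag' _] C by blast
      qed
    qed
  qed
  show ?thesis
  proof
    show "\<forall>t. lex_less t (k + m, 0) \<longrightarrow> SubAt \<phi> t \<xi> = SubAt \<phi> t \<eta>"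
      using A unfolding SubAt_def B_def by blast
    show "\<forall>s. lex_le (k, 0) s \<longrightarrow> SubAt \<phi> s \<eta> = SubAt \<phi> (fst s + m, snd s) \<eta>"
      using per_b[OF h3] unfolding SubAt_def by blast
  qed
qed

end
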